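(* Let $X$ be a quasi-Banach rearrangement invariant space on $\mathbb{R}$ and let $p>0$. Then there exist a number $0<u\le p$ and a constant $c$ such that for every $n$ and all $f_1,\dots,f_n\in X$, $$\Big\|\Big(\sum_{i=1}^n|f_i|^p\Big)^{1/p}\Big\|_X\le c\Big(\sum_{i=1}^n\|f_i\|_X^u\Big)^{1/u}.$$
   Context: For measurable $f$, $f^*(s)=\sup\{t:\text{measure}\{|f|>t\}>s\}$. A rearrangement invariant (r.i.) space $X$ on $\mathbb{R}$ is a set of measurable functions (modulo a.e. equality) with a complete quasi-norm $\|\cdot\|_X$ such that: (1) if $g^*\le f^*$ and $f\in X$ then $g\in X$ and $\|g\|_X\le\|f\|_X$; (2) every simple function with support of finite measure is in $X$; (3) either $f_n\searrow 0$ implies $\|f_n\|_X\searrow 0$, or $0\le f_n\nearrow f$ with $\sup_n\|f_n\|_X<\infty$ implies $f\in X$ and $\|f\|_X=\sup_n\|f_n\|_X$. *)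

theory Defs
  imports "HOL-Analysis.Analysis"
begin

definition drearr :: "(real \<Rightarrow> real) \<Rightarrow> real \<Rightarrow> ereal" where
  "drearr f s = Sup {ereal t | t. emeasure lebesgue {x. \<bar>f x\<bar> > t} > ennreal s}"

definition simple_fin_supp :: "(real \<Rightarrow> real) \<Rightarrow> bool" where
  "simple_fin_supp f \<longleftrightarrow> f \<in> borel_measurable lebesgue \<and> finite (range f)
     \<and> emeasure lebesgue {x. f x \<noteq> 0} < \<infinity>"

text \<open>Complete quasi-norm N on a set X of (Lebesgue measurable, real-valued)
  functions forming a vector space (elements are identified modulo a.e. equality:
  N f = 0 iff f = 0 a.e.).\<close>
definition quasi_banach :: "(real \<Rightarrow> real) set \<Rightarrow> ((real \<Rightarrow> real) \<Rightarrow> real) \<Rightarrow> bool" where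
  "quasi_banach X N \<longleftrightarrow>
     X \<subseteq> borel_measurable lebesgue \<and>
     (\<lambda>x. 0) \<in> X \<and>
     (\<forall>f\<in>X. \<forall>g\<in>X. (\<lambda>x. f x + g x) \<in> X) \<and>
     (\<forall>f\<in>X. \<forall>a. (\<lambda>x. a * f x) \<in> X) \<and>
     (\<forall>f\<in>X. N f \<ge> 0) \<and>
     (\<forall>f\<in>X. N f = 0 \<longleftrightarrow> (AE x in lebesgue. f x = 0)) \<and>
     (\<forall>f\<in>X. \<forall>a. N (\<lambda>x. a * f x) = \<bar>a\<bar> * N f) \<and>
     (\<exists>K. \<forall>f\<in>X. \<forall>g\<in>X. N (\<lambda>x. f x + g x) \<le> K * (N f + N g)) \<and>
     (\<forall>F. (\<forall>n. F n \<in> X) \<longrightarrow>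
        (\<forall>e>0. \<exists>M. \<forall>m\<ge>M. \<forall>n\<ge>M. N (\<lambda>x. F m x - F n x) < e) \<longrightarrow>
        (\<exists>g\<in>X. (\<lambda>n. N (\<lambda>x. F n x - g x)) \<longlonglongrightarrow> 0))"

definition ri_space :: "(real \<Rightarrow> real) set \<Rightarrow> ((real \<Rightarrow> real) \<Rightarrow> real) \<Rightarrow> bool" where
  "ri_space X N \<longleftrightarrow>
     quasi_banach X N \<and>
     (\<forall>f\<in>X. \<forall>g. g \<in> borel_measurable lebesgue \<longrightarrow>
        (\<forall>s\<ge>0. drearr g s \<le> drearr f s) \<longrightarrow> g \<in> X \<and> N g \<le> N f) \<and>
     (\<forall>f. simple_fin_supp f \<longrightarrow> f \<in> X) \<and>
     ((\<forall>F. (\<forall>n. F n \<in> X) \<longrightarrow> (\<forall>n x. 0 \<le> F (Suc n) x \<and> F (Suc n) x \<le> F n x) \<longrightarrow>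
          (\<forall>x. (\<lambda>n. F n x) \<longlonglongrightarrow> 0) \<longrightarrow> (\<lambda>n. N (F n)) \<longlonglongrightarrow> 0)
      \<or>
      (\<forall>F f. (\<forall>n. F n \<in> X) \<longrightarrow> (\<forall>n x. 0 \<le> F n x \<and> F n x \<le> F (Suc n) x) \<longrightarrow>
          (\<forall>x. (\<lambda>n. F n x) \<longlonglongrightarrow> f x) \<longrightarrow> bdd_above (range (\<lambda>n. N (F n))) \<longrightarrow>
          f \<in> X \<and> N f = (SUP n. N (F n))))"

end

theory Submission
  imports Defs
begin

lemma split_bound:
  fixes M :: "nat set \<Rightarrow> real" and w :: "nat \<Rightarrow> real" and K :: real and m :: nat
  assumes K1: "K \<ge> 1" and m: "2^m \<ge> 2*(K+K^2)" and w: "\<And>i. w i \<ge> 0"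
  and M0: "M {} \<le> 0" and M1: "\<And>i. i \<in> D \<Longrightarrow> M {i} \<le> w i ^ m"
  and Mun: "\<And>I J. finite I \<Longrightarrow> finite J \<Longrightarrow> I \<subseteq> D \<Longrightarrow> J \<subseteq> D \<Longrightarrow> I \<inter> J = {} \<Longrightarrow> M (I \<union> J) \<le> K * (M I + M J)"
  shows "finite I \<Longrightarrow> I \<subseteq> D \<Longrightarrow> M I \<le> 2*K^2 * (sum w I)^m"
proof (induction I rule: finite_psubset_induct)
  case (psubset I)
  show ?case
  proof (cases "I = {}")
    case True
    have "0 \<le> 2*K^2*(sum w I)^m" using True by (cases m) auto
    moreover have "M I \<le> 0" using M0 True by simp
    ultimately show ?thesis by linarith
  next
    case False
    define S where "S = sum w I"
    have S0: "S \<ge> 0" using w by (simp add: S_def sum_nonneg)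
    obtain j where j: "j \<in> I" "sum w {i\<in>I. i<j} \<le> S/2" "sum w {i\<in>I. j<i} \<le> S/2"
    proof (cases "S = 0")
      case True
      from \<open>I\<noteq>{}\<close> obtain j where "j\<in>I" by auto
      moreover have "sum w {i\<in>I. i<j} \<le> S" unfolding S_def
        by (rule sum_mono2) (use psubset.hyps w in auto)
      moreover have "sum w {i\<in>I. j<i} \<le> S" unfolding S_def
        by (rule sum_mono2) (use psubset.hyps w in auto)
      ultimately show ?thesis using that True by auto
    next
      case False
      hence Sp: "S > 0" using S0 by auto
      have ex: "\<exists>j. sum w {i\<in>I. i\<le>j} > S/2"
      proof
        have "{i\<in>I. i\<le>Max I} = I" using psubset.hyps by auto
        thus "sum w {i\<in>I. i\<le>Max I} > S/2" using Sp S_def by simp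
      qed
      define j where "j = (LEAST j. sum w {i\<in>I. i\<le>j} > S/2)"
      have j1: "sum w {i\<in>I. i\<le>j} > S/2" using LeastI_ex[OF ex] j_def by simp
      have j2: "sum w {i\<in>I. i<j} \<le> S/2"
      proof (cases j)
        case 0 thus ?thesis using Sp by simp
      next
        case (Suc k)
        have "{i\<in>I. i<j} = {i\<in>I. i\<le>k}" using Suc by auto
        moreover have "\<not> sum w {i\<in>I. i\<le>k} > S/2"
          using not_less_Least[of k "\<lambda>j. sum w {i\<in>I. i\<le>j} > S/2"] Suc j_def by auto
        ultimately show ?thesis by simp
      qed
      have jI: "j \<in> I"
      proof (rule ccontr)
        assume "j \<notin> I"
        hence "{i\<in>I. i\<le>j} = {i\<in>I. i<j}" by (auto simp: order.order_iff_strict)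
        thus False using j1 j2 by simp
      qed
      have "I = {i\<in>I. i\<le>j} \<union> {i\<in>I. j<i}" by auto
      hence "S = sum w {i\<in>I. i\<le>j} + sum w {i\<in>I. j<i}" unfolding S_def
        by (metis (no_types, lifting) psubset.hyps finite_Un sum.union_disjoint
            disjoint_iff mem_Collect_eq not_less)
      hence j3: "sum w {i\<in>I. j<i} \<le> S/2" using j1 by simp
      show ?thesis using that jI j2 j3 .
    qed
    define A where "A = {i\<in>I. i<j}"
    define B where "B = {i\<in>I. j<i}"
    have IU: "I = A \<union> ({j} \<union> B)" using j(1) unfolding A_def B_def by auto
    have fA: "finite A" "finite B" using psubset.hyps unfolding A_def B_def by auto
    have sA: "A \<subset> I" "B \<subset> I" using j(1) unfolding A_def B_def by auto
    have DD: "A \<subseteq> D" "B \<subseteq> D" "j \<in> D" using sA psubset.prems j(1) by auto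
    have IA: "M A \<le> 2*K^2 * (sum w A)^m" using psubset.IH[OF sA(1)] DD by simp
    have IB: "M B \<le> 2*K^2 * (sum w B)^m" using psubset.IH[OF sA(2)] DD by simp
    have wA: "sum w A \<ge> 0" "sum w B \<ge> 0" using w by (auto intro: sum_nonneg)
    define T where "T = S^m"
    have T0: "T \<ge> 0" using S0 T_def by simp
    have pA: "(sum w A)^m \<le> T / 2^m" unfolding T_def
      using power_mono[OF j(2)[folded A_def] wA(1), of m] by (simp add: power_divide)
    have pB: "(sum w B)^m \<le> T / 2^m" unfolding T_def
      using power_mono[OF j(3)[folded B_def] wA(2), of m] by (simp add: power_divide)
    have wj: "w j \<le> S" unfolding S_def using j(1) psubset.hyps w by (intro member_le_sum) auto
    have Mj: "M {j} \<le> T" using M1[OF DD(3)] power_mono[OF wj w, of m] T_def by simp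
    have MA: "M A \<le> 2*K^2 * (T/2^m)" using IA pA K1 by (meson dual_order.trans mult_left_mono zero_le_mult_iff zero_le_numeral zero_le_power2)
    have MB: "M B \<le> 2*K^2 * (T/2^m)" using IB pB K1 by (meson dual_order.trans mult_left_mono zero_le_mult_iff zero_le_numeral zero_le_power2)
    have d1: "A \<inter> ({j} \<union> B) = {}" "{j} \<inter> B = {}" unfolding A_def B_def by auto
    have "M I \<le> K * (M A + M ({j} \<union> B))"
      using Mun[of A "{j} \<union> B"] IU fA DD d1 by simp
    also have "\<dots> \<le> K * (M A + K * (M {j} + M B))"
      using Mun[of "{j}" B] fA DD d1 K1 by simp
    also have "\<dots> \<le> K * (2*K^2 * (T/2^m) + K * (T + 2*K^2 * (T/2^m)))"
      using MA MB Mj K1 by (intro mult_left_mono add_mono) auto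
    also have "\<dots> = (K + K^2) * 2 * K^2 * (T/2^m) + K^2 * T"
      by (simp add: algebra_simps power2_eq_square)
    also have "\<dots> \<le> 2^m * K^2 * (T/2^m) + K^2 * T"
      using m K1 T0 by (intro add_right_mono mult_right_mono) (auto simp: algebra_simps)
    also have "\<dots> = 2*K^2 * T" by simp
    finally show ?thesis unfolding T_def S_def .
  qed
qed


lemma ri_dom:
  assumes ri: "ri_space X N" and f: "f \<in> X" and g: "g \<in> borel_measurable lebesgue"
    and le: "\<And>x. \<bar>g x\<bar> \<le> \<bar>f x\<bar>"
  shows "g \<in> X \<and> N g \<le> N f"
proof -
  have qb: "quasi_banach X N" using ri[unfolded ri_space_def] by (rule conjunct1)
  have XB: "X \<subseteq> borel_measurable lebesgue" using qb[unfolded quasi_banach_def] by (rule conjunct1)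
  have fm: "f \<in> borel_measurable lebesgue" using XB f by (rule subsetD)
  have mono: "\<forall>f\<in>X. \<forall>g. g \<in> borel_measurable lebesgue \<longrightarrow>
        (\<forall>s\<ge>0. drearr g s \<le> drearr f s) \<longrightarrow> g \<in> X \<and> N g \<le> N f"
    using ri[unfolded ri_space_def] by (elim conjE)
  have am: "(\<lambda>x. \<bar>f x\<bar>) \<in> borel_measurable lebesgue" using fm by (rule borel_measurable_abs)
  have "drearr g s \<le> drearr f s" for s
    unfolding drearr_def
  proof (rule Sup_subset_mono, safe)
    fix t assume t: "ennreal s < emeasure lebesgue {x. t < \<bar>g x\<bar>}"
    have "{x \<in> space lebesgue. t < \<bar>f x\<bar>} \<in> sets lebesgue"
      using am unfolding borel_measurable_iff_greater by blast
    hence meas: "{x. t < \<bar>f x\<bar>} \<in> sets lebesgue" by simp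
    have sub: "{x. t < \<bar>g x\<bar>} \<subseteq> {x. t < \<bar>f x\<bar>}" using le by (auto intro: less_le_trans)
    have "emeasure lebesgue {x. t < \<bar>g x\<bar>} \<le> emeasure lebesgue {x. t < \<bar>f x\<bar>}"
      by (rule emeasure_mono[OF sub meas])
    thus "\<exists>t'. ereal t = ereal t' \<and> ennreal s < emeasure lebesgue {x. t' < \<bar>f x\<bar>}"
      using t by auto
  qed
  thus ?thesis using mono f g by blast
qed

lemma powr_split:
  fixes a b p :: real assumes "a \<ge> 0" "b \<ge> 0" "p > 0"
  shows "(a+b) powr (1/p) \<le> 2 powr (1/p) * (a powr (1/p) + b powr (1/p))"
proof -
  have "(a+b) powr (1/p) \<le> (2 * max a b) powr (1/p)"
    using assms by (intro powr_mono2) auto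
  also have "\<dots> = 2 powr (1/p) * max a b powr (1/p)" using assms by (simp add: powr_mult)
  also have "max a b powr (1/p) \<le> a powr (1/p) + b powr (1/p)"
    by (cases "a \<le> b") (auto simp: max_def)
  hence "2 powr (1/p) * max a b powr (1/p) \<le> 2 powr (1/p) * (a powr (1/p) + b powr (1/p))"
    by (intro mult_left_mono) auto
  finally show ?thesis .
qed

lemma qb_parts:
  assumes "quasi_banach X N"
  shows "X \<subseteq> borel_measurable lebesgue" "(\<lambda>x. 0) \<in> X"
    "\<And>f g. f \<in> X \<Longrightarrow> g \<in> X \<Longrightarrow> (\<lambda>x. f x + g x) \<in> X"
    "\<And>f a. f \<in> X \<Longrightarrow> (\<lambda>x. a * f x) \<in> X"
    "\<And>f. f \<in> X \<Longrightarrow> N f \<ge> 0"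
    "\<And>f. f \<in> X \<Longrightarrow> N f = 0 \<longleftrightarrow> (AE x in lebesgue. f x = 0)"
    "\<And>f a. f \<in> X \<Longrightarrow> N (\<lambda>x. a * f x) = \<bar>a\<bar> * N f"
    "\<exists>K. \<forall>f\<in>X. \<forall>g\<in>X. N (\<lambda>x. f x + g x) \<le> K * (N f + N g)"
proof -
  note Q = assms[unfolded quasi_banach_def]
  show "X \<subseteq> borel_measurable lebesgue" using Q by (elim conjE)
  show "(\<lambda>x. 0) \<in> X" using Q by (elim conjE)
  show "\<And>f g. f \<in> X \<Longrightarrow> g \<in> X \<Longrightarrow> (\<lambda>x. f x + g x) \<in> X"
  proof - fix f g assume "f \<in> X" "g \<in> X" thus "(\<lambda>x. f x + g x) \<in> X" using Q[THEN conjunct2, THEN conjunct2, THEN conjunct1] by blast qed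
  show "\<And>f a. f \<in> X \<Longrightarrow> (\<lambda>x. a * f x) \<in> X"
  proof - fix f a assume "f \<in> X" thus "(\<lambda>x. a * f x) \<in> X" using Q[THEN conjunct2, THEN conjunct2, THEN conjunct2, THEN conjunct1] by blast qed
  show "\<And>f. f \<in> X \<Longrightarrow> N f \<ge> 0"
  proof - fix f assume "f \<in> X" thus "N f \<ge> 0" using Q[THEN conjunct2, THEN conjunct2, THEN conjunct2, THEN conjunct2, THEN conjunct1] by blast qed
  show "\<And>f. f \<in> X \<Longrightarrow> N f = 0 \<longleftrightarrow> (AE x in lebesgue. f x = 0)"
  proof - fix f assume "f \<in> X" thus "N f = 0 \<longleftrightarrow> (AE x in lebesgue. f x = 0)" using Q[THEN conjunct2, THEN conjunct2, THEN conjunct2, THEN conjunct2, THEN conjunct2, THEN conjunct1] by blast qed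
  show "\<And>f a. f \<in> X \<Longrightarrow> N (\<lambda>x. a * f x) = \<bar>a\<bar> * N f"
  proof - fix f a assume "f \<in> X" thus "N (\<lambda>x. a * f x) = \<bar>a\<bar> * N f" using Q[THEN conjunct2, THEN conjunct2, THEN conjunct2, THEN conjunct2, THEN conjunct2, THEN conjunct2, THEN conjunct1] by blast qed
  show "\<exists>K. \<forall>f\<in>X. \<forall>g\<in>X. N (\<lambda>x. f x + g x) \<le> K * (N f + N g)"
    using Q[THEN conjunct2, THEN conjunct2, THEN conjunct2, THEN conjunct2, THEN conjunct2, THEN conjunct2, THEN conjunct2, THEN conjunct1] .
qed

theorem lemma6:
  fixes X :: "(real \<Rightarrow> real) set" and N :: "(real \<Rightarrow> real) \<Rightarrow> real" and p :: real
  assumes "ri_space X N" and "p > 0"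
  shows "\<exists>u c. 0 < u \<and> u \<le> p \<and>
    (\<forall>(n::nat) (fs :: nat \<Rightarrow> real \<Rightarrow> real). (\<forall>i<n. fs i \<in> X) \<longrightarrow>
       (\<lambda>x. (\<Sum>i<n. \<bar>fs i x\<bar> powr p) powr (1/p)) \<in> X \<and>
       N (\<lambda>x. (\<Sum>i<n. \<bar>fs i x\<bar> powr p) powr (1/p))
         \<le> c * (\<Sum>i<n. N (fs i) powr u) powr (1/u))"
proof -
  note ri = assms(1)
  have p: "p > 0" by fact
  have qb: "quasi_banach X N" using ri[unfolded ri_space_def] by (rule conjunct1)
  note QP = qb_parts[OF qb]
  have XB: "X \<subseteq> borel_measurable lebesgue" by (rule QP(1))
  have X0: "(\<lambda>x. 0) \<in> X" by (rule QP(2))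
  note Xadd = QP(3) and Xmul = QP(4) and Nnn = QP(5) and Nz = QP(6) and Nmul = QP(7)
  obtain K where K0: "\<forall>f\<in>X. \<forall>g\<in>X. N (\<lambda>x. f x + g x) \<le> K * (N f + N g)" using QP(8) by blast
  have K: "\<And>f g. f \<in> X \<Longrightarrow> g \<in> X \<Longrightarrow> N (\<lambda>x. f x + g x) \<le> K * (N f + N g)" using K0 by blast
  define K' where "K' = max K 1"
  have K'1: "K' \<ge> 1" unfolding K'_def by simp
  have K': "\<And>f g. f \<in> X \<Longrightarrow> g \<in> X \<Longrightarrow> N (\<lambda>x. f x + g x) \<le> K' * (N f + N g)"
  proof -
    fix f g assume "f \<in> X" "g \<in> X"
    hence "K * (N f + N g) \<le> K' * (N f + N g)" using Nnn unfolding K'_def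
      by (intro mult_right_mono) auto
    thus "N (\<lambda>x. f x + g x) \<le> K' * (N f + N g)" using K[OF \<open>f\<in>X\<close> \<open>g\<in>X\<close>] by linarith
  qed
  define c where "c = 2 powr (1/p)"
  have c1: "c \<ge> 1" unfolding c_def using p by (intro ge_one_powr_ge_zero) auto
  define K2 where "K2 = (2*c*K') powr p"
  have "1*1 \<le> c*K'" by (rule mult_mono) (use c1 K'1 in auto)
  hence "1 \<le> 2*c*K'" by simp
  hence K21: "K2 \<ge> 1" unfolding K2_def using p
    by (intro ge_one_powr_ge_zero) auto
  obtain m0 :: nat where m0: "2*(K2+K2^2) < 2^m0" using real_arch_pow[of 2 "2*(K2+K2^2)"] by auto
  define m where "m = Suc m0"
  have m1: "m \<ge> 1" unfolding m_def by simp
  have "(2::real)^m0 \<le> 2^m" unfolding m_def by simp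
  hence m: "2*(K2+K2^2) \<le> 2^m" using m0 by linarith
  define u where "u = p / real m"
  have u0: "u > 0" "u \<le> p" unfolding u_def using p m1 by (auto simp: divide_le_eq)
  define C where "C = (2*K2^2) powr (1/p)"
  show ?thesis
  proof (rule exI[where x=u], rule exI[where x=C], intro conjI u0 allI impI)
    fix n :: nat and fs :: "nat \<Rightarrow> real \<Rightarrow> real"
    assume fsX: "\<forall>i<n. fs i \<in> X"
    define h where "h I = (\<lambda>x. (\<Sum>i\<in>I. \<bar>fs i x\<bar> powr p) powr (1/p))" for I
    have hmeas: "h I \<in> borel_measurable lebesgue" if "I \<subseteq> {..<n}" for I
    proof -
      have "\<And>i. i \<in> I \<Longrightarrow> fs i \<in> borel_measurable lebesgue" using that fsX XB by auto
      thus ?thesis unfolding h_def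
        by (intro powr_real_measurable borel_measurable_sum measurable_abs_powr borel_measurable_const) auto
    qed
    have hnn: "h I x \<ge> 0" for I x unfolding h_def by simp
    have h0: "h {} = (\<lambda>x. 0)" unfolding h_def using p by simp
    have h1: "h {i} = (\<lambda>x. \<bar>fs i x\<bar>)" for i unfolding h_def using p
      by (simp add: powr_powr)
    have h1X: "h {i} \<in> X \<and> N (h {i}) = N (fs i)" if "i < n" for i
    proof -
      have fi: "fs i \<in> X" "fs i \<in> borel_measurable lebesgue" using that fsX XB by auto
      have hm1: "h {i} \<in> borel_measurable lebesgue" using hmeas[of "{i}"] that by auto
      have a: "h {i} \<in> X \<and> N (h {i}) \<le> N (fs i)"
        by (rule ri_dom[OF ri fi(1) hm1]) (simp add: h1)
      have b: "N (fs i) \<le> N (h {i})"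
        using ri_dom[OF ri a[THEN conjunct1] fi(2)] unfolding h1 by auto
      show ?thesis using a b by auto
    qed
    have hun: "h (I \<union> J) \<in> X \<and> N (h (I \<union> J)) \<le> c * K' * (N (h I) + N (h J))"
      if "finite I" "finite J" "I \<subseteq> {..<n}" "J \<subseteq> {..<n}" "I \<inter> J = {}" "h I \<in> X" "h J \<in> X" for I J
    proof -
      define g where "g = (\<lambda>x. c * (h I x + h J x))"
      have gX: "g \<in> X" unfolding g_def using that by (intro Xmul Xadd)
      have pw: "\<bar>h (I \<union> J) x\<bar> \<le> \<bar>g x\<bar>" for x
      proof -
        have "h (I \<union> J) x = ((\<Sum>i\<in>I. \<bar>fs i x\<bar> powr p) + (\<Sum>i\<in>J. \<bar>fs i x\<bar> powr p)) powr (1/p)"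
          unfolding h_def using that by (simp add: sum.union_disjoint)
        also have "\<dots> \<le> g x" unfolding g_def h_def c_def
          by (rule powr_split) (use p in \<open>auto intro: sum_nonneg\<close>)
        finally show ?thesis using hnn by simp
      qed
      have d: "h (I \<union> J) \<in> X \<and> N (h (I \<union> J)) \<le> N g"
        using ri_dom[OF ri gX _ pw] hmeas[of "I \<union> J"] that by auto
      have "N g = c * N (\<lambda>x. h I x + h J x)" unfolding g_def
        using Nmul[OF Xadd[OF that(6,7)], of c] c1 by simp
      also have "\<dots> \<le> c * (K' * (N (h I) + N (h J)))"
        using K'[OF that(6,7)] c1 by (intro mult_left_mono) auto
      finally show ?thesis using d by (simp add: mult.assoc)
    qed
    have hX: "h I \<in> X" if "finite I" "I \<subseteq> {..<n}" for I
      using that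
    proof (induction I rule: finite_induct)
      case empty thus ?case using h0 X0 by simp
    next
      case (insert i I)
      have "h ({i} \<union> I) \<in> X" using insert h1X by (intro hun[THEN conjunct1]) auto
      thus ?case by simp
    qed
    define M where "M I = N (h I) powr p" for I
    define w where "w i = N (fs i) powr u" for i
    have bound: "M {..<n} \<le> 2*K2^2 * (sum w {..<n})^m"
    proof (rule split_bound[where D="{..<n}"])
      show "K2 \<ge> 1" by (rule K21)
      show "2*(K2+K2^2) \<le> 2^m" by (rule m)
      show "\<And>i. w i \<ge> 0" unfolding w_def by simp
      show "M {} \<le> 0" unfolding M_def h0 using Nz[OF X0] by simp
    next
      fix i assume "i \<in> {..<n}"
      hence e: "N (h {i}) = N (fs i)" "fs i \<in> X" using h1X fsX by auto
      have "w i ^ m = N (fs i) powr p"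
      proof (cases "N (fs i) = 0")
        case True thus ?thesis unfolding w_def using m1 by simp
      next
        case False
        thus ?thesis unfolding w_def u_def using m1 Nnn[OF e(2)]
          by (simp add: powr_power)
      qed
      thus "M {i} \<le> w i ^ m" unfolding M_def e by simp
    next
      fix I J assume IJ: "finite I" "finite J" "I \<subseteq> {..<n}" "J \<subseteq> {..<n}" "I \<inter> J = {}"
      have X2: "h I \<in> X" "h J \<in> X" using hX IJ by auto
      define a where "a = N (h I)"
      define b where "b = N (h J)"
      have ab: "a \<ge> 0" "b \<ge> 0" using Nnn X2 a_def b_def by auto
      have "N (h (I \<union> J)) \<le> c * K' * (a + b)" using hun[OF IJ X2] a_def b_def by simp
      also have "\<dots> \<le> (2*c*K') * max a b" using ab c1 K'1
        by (simp add: mult.assoc mult_left_mono)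
      finally have "M (I \<union> J) \<le> ((2*c*K') * max a b) powr p"
        unfolding M_def using p Nnn hun[OF IJ X2] by (intro powr_mono2) auto
      also have "\<dots> = K2 * max a b powr p" unfolding K2_def using ab c1 K'1
        by (simp add: powr_mult)
      also have "max a b powr p \<le> a powr p + b powr p" by (simp add: max_def)
      hence "K2 * max a b powr p \<le> K2 * (a powr p + b powr p)" using K21 by simp
      finally show "M (I \<union> J) \<le> K2 * (M I + M J)" unfolding M_def a_def b_def .
    qed auto
    define S where "S = sum w {..<n}"
    have S0: "S \<ge> 0" unfolding S_def w_def by (simp add: sum_nonneg)
    have hn: "h {..<n} \<in> X" using hX by simp
    have "N (h {..<n}) = M {..<n} powr (1/p)" unfolding M_def using Nnn[OF hn] p by (simp add: powr_powr)
    also have "\<dots> \<le> (2*K2^2 * S^m) powr (1/p)" using bound p unfolding S_def M_def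
      by (intro powr_mono2) auto
    also have "\<dots> = C * (S^m) powr (1/p)" unfolding C_def using S0 by (simp add: powr_mult)
    also have "(S^m) powr (1/p) = S powr (1/u)"
    proof -
      have "S^m = S powr real m" using S0 m1 by (simp add: powr_realpow')
      thus ?thesis unfolding u_def using p m1 by (simp add: powr_powr)
    qed
    finally have r: "N (h {..<n}) \<le> C * (\<Sum>i<n. N (fs i) powr u) powr (1/u)" unfolding S_def w_def .
    show "(\<lambda>x. (\<Sum>i<n. \<bar>fs i x\<bar> powr p) powr (1/p)) \<in> X"
      using hn unfolding h_def .
    show "N (\<lambda>x. (\<Sum>i<n. \<bar>fs i x\<bar> powr p) powr (1/p)) \<le> C * (\<Sum>i<n. N (fs i) powr u) powr (1/u)"
      using r unfolding h_def .
  qed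
qed

end
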